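(* Let $S$ be a numerical semigroup minimally generated by $n_1<\cdots<n_e$, with conductor $c$. Let $m\ge 2c-1$, let $M=\{m=m_1<\cdots<m_r\}$ be an $(S,m,r)$-amenable set, and let $L=M\cap[m,m+n_e)$. Then $\mathrm D(M)=(M\setminus L)\cup\mathrm D(L)$, and moreover $\sharp\mathrm D(M)=\sharp(M\setminus L)+\sharp\mathrm D(L)$.
   Context: A numerical semigroup is a submonoid of $\mathbb N$ with finite complement; its conductor $c$ is the least element of $S$ such that $c+n\in S$ for all $n\in\mathbb N$. For $x\in S$, $\mathrm D(x)=\{\alpha\in S\mid x-\alpha\in S\}$ and for $A\subseteq S$, $\mathrm D(A)=\bigcup_{x\in A}\mathrm D(x)$. A set $M=\{m_1<\cdots<m_r\}\subseteq S$ with $2c-1\le m=m_1$ is $(S,m,r)$-amenable if $\mathrm D(m_i)\cap[m,\infty)\subseteq M$ for all $i$. *)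

theory Defs
  imports Main
begin

definition numerical_semigroup :: "nat set \<Rightarrow> bool" where
  "numerical_semigroup S \<longleftrightarrow> 0 \<in> S \<and> (\<forall>x\<in>S. \<forall>y\<in>S. x + y \<in> S) \<and> finite (UNIV - S)"

definition minimal_generators :: "nat set \<Rightarrow> nat set" where
  "minimal_generators S = {x \<in> S. x \<noteq> 0 \<and>
     \<not> (\<exists>a\<in>S. \<exists>b\<in>S. a \<noteq> 0 \<and> b \<noteq> 0 \<and> x = a + b)}"

definition conductor :: "nat set \<Rightarrow> nat" where
  "conductor S = (LEAST c. c \<in> S \<and> (\<forall>n. c + n \<in> S))"

definition D :: "nat set \<Rightarrow> nat \<Rightarrow> nat set" where
  "D S x = {a \<in> S. a \<le> x \<and> x - a \<in> S}"

definition D_set :: "nat set \<Rightarrow> nat set \<Rightarrow> nat set" where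
  "D_set S A = (\<Union>x\<in>A. D S x)"

definition amenable :: "nat set \<Rightarrow> nat \<Rightarrow> nat \<Rightarrow> nat set \<Rightarrow> bool" where
  "amenable S m r M \<longleftrightarrow> M \<subseteq> S \<and> finite M \<and> card M = r \<and> M \<noteq> {} \<and> Min M = m \<and>
     2 * conductor S - 1 \<le> m \<and> (\<forall>x\<in>M. D S x \<inter> {m..} \<subseteq> M)"

end

theory Submission
  imports Defs
begin

lemma mg_decomp:
  assumes ns: "numerical_semigroup S"
  shows "s \<in> S \<Longrightarrow> s \<noteq> 0 \<Longrightarrow> \<exists>g\<in>minimal_generators S. g \<le> s \<and> s - g \<in> S"
proof (induction s rule: less_induct)
  case (less s)
  have add: "\<And>x y. x \<in> S \<Longrightarrow> y \<in> S \<Longrightarrow> x + y \<in> S" and z: "0 \<in> S"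
    using ns unfolding numerical_semigroup_def by auto
  show ?case
  proof (cases "s \<in> minimal_generators S")
    case True then show ?thesis using z by auto
  next
    case False
    then obtain a b where ab: "a \<in> S" "b \<in> S" "a \<noteq> 0" "b \<noteq> 0" "s = a + b"
      using less.prems unfolding minimal_generators_def by auto
    then obtain g where g: "g \<in> minimal_generators S" "g \<le> a" "a - g \<in> S"
      using less.IH[of a] by auto
    have "s - g = (a - g) + b" using ab g by auto
    moreover have "g \<le> s" using g ab by auto
    moreover have "s - g \<in> S" using add[OF g(3) ab(2)] \<open>s - g = (a - g) + b\<close> by simp
    ultimately show ?thesis using g(1) by blast
  qed
qed

lemma mg_finite:
  assumes ns: "numerical_semigroup S"
  shows "finite (minimal_generators S)"
proof -
  have fin: "finite (UNIV - S)" and add: "\<And>x y. x \<in> S \<Longrightarrow> y \<in> S \<Longrightarrow> x + y \<in> S"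
    using ns unfolding numerical_semigroup_def by auto
  obtain c where c: "\<And>n. n \<ge> c \<Longrightarrow> n \<in> S"
  proof -
    obtain c where "\<forall>x\<in>UNIV - S. x < c" using fin finite_nat_set_iff_bounded by blast
    then show ?thesis using that by (meson DiffI UNIV_I not_le)
  qed
  have kS: "c + 1 \<in> S" "c + 1 \<noteq> 0" using c by auto
  have "minimal_generators S \<subseteq> {..<c + (c+1) + 1}"
  proof
    fix x assume x: "x \<in> minimal_generators S"
    show "x \<in> {..<c + (c+1) + 1}"
    proof (rule ccontr)
      assume "x \<notin> {..<c + (c+1) + 1}"
      then have "x \<ge> c + (c+1) + 1" by simp
      then have ge: "x - (c+1) \<ge> c" "x - (c+1) \<noteq> 0" "x = (c+1) + (x - (c+1))" by arith+
      then have "x - (c+1) \<in> S" using c[OF ge(1)] by simp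
      have nx: "\<not> (\<exists>a\<in>S. \<exists>b\<in>S. a \<noteq> 0 \<and> b \<noteq> 0 \<and> x = a + b)"
        using x by (simp add: minimal_generators_def)
      have "\<exists>a\<in>S. \<exists>b\<in>S. a \<noteq> 0 \<and> b \<noteq> 0 \<and> x = a + b"
        using kS ge(2,3) \<open>x - (c+1) \<in> S\<close> by (intro bexI[of _ "c+1"] bexI[of _ "x - (c+1)"]) simp_all
      then show False using nx by simp
    qed
  qed
  then show ?thesis by (rule finite_subset) simp
qed

theorem lemma3p10:
  fixes S M :: "nat set" and m r :: nat
  assumes "numerical_semigroup S"
    and "2 * conductor S - 1 \<le> m"
    and "amenable S m r M"
  shows "D_set S M = (M - M \<inter> {m..<m + Max (minimal_generators S)})
                      \<union> D_set S (M \<inter> {m..<m + Max (minimal_generators S)})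
     \<and> card (D_set S M) = card (M - M \<inter> {m..<m + Max (minimal_generators S)})
                      + card (D_set S (M \<inter> {m..<m + Max (minimal_generators S)}))"
proof -
  define ne where "ne = Max (minimal_generators S)"
  define L where "L = M \<inter> {m..<m + ne}"
  have ns: "numerical_semigroup S" by fact
  have add: "\<And>x y. x \<in> S \<Longrightarrow> y \<in> S \<Longrightarrow> x + y \<in> S" and z: "0 \<in> S"
    using ns unfolding numerical_semigroup_def by auto
  have MS: "M \<subseteq> S" and finM: "finite M" and Mne: "M \<noteq> {}" and Mm: "Min M = m"
    and am: "\<And>x. x \<in> M \<Longrightarrow> D S x \<inter> {m..} \<subseteq> M"
    using assms(3) unfolding amenable_def by auto
  have Mge: "\<And>x. x \<in> M \<Longrightarrow> m \<le> x" using Mm finM by auto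
  have gle: "\<And>g. g \<in> minimal_generators S \<Longrightarrow> g \<le> ne"
    unfolding ne_def using mg_finite[OF ns] by auto
  have self: "\<And>x. x \<in> S \<Longrightarrow> x \<in> D S x" unfolding D_def using z by auto
  have key: "\<And>x. x \<in> M \<Longrightarrow> D S x \<subseteq> (M - L) \<union> D_set S L"
  proof -
    fix x show "x \<in> M \<Longrightarrow> D S x \<subseteq> (M - L) \<union> D_set S L"
    proof (induction x rule: less_induct)
      case (less x)
      show ?case
      proof (cases "x < m + ne")
        case True
        then have "x \<in> L" using less.prems Mge unfolding L_def by auto
        then show ?thesis unfolding D_set_def by auto
      next
        case False
        show ?thesis
        proof
          fix a assume a: "a \<in> D S x"
          show "a \<in> (M - L) \<union> D_set S L"
          proof (cases "m \<le> a")
            case True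
            then have aM: "a \<in> M" using am[OF less.prems] a by auto
            show ?thesis
            proof (cases "a \<in> L")
              case True
              then show ?thesis using self aM MS unfolding D_set_def by blast
            qed (use aM in auto)
          next
            case False
            have aS: "a \<in> S" "a \<le> x" "x - a \<in> S" using a unfolding D_def by auto
            have "x - a \<noteq> 0" using False \<open>\<not> x < m + ne\<close> by auto
            then obtain g where g: "g \<in> minimal_generators S" "g \<le> x - a" "x - a - g \<in> S"
              using mg_decomp[OF ns] aS by blast
            have g0: "g \<noteq> 0" "g \<in> S" using g(1) unfolding minimal_generators_def by auto
            have "g \<le> ne" using gle g by auto
            define y where "y = x - g"
            have ym: "m \<le> y" using \<open>g \<le> ne\<close> \<open>\<not> x < m + ne\<close> unfolding y_def by auto
            have "y = a + (x - a - g)" using g aS unfolding y_def by auto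
            then have yS: "y \<in> S" using add[OF aS(1) g(3)] by simp
            have "y \<in> D S x" unfolding D_def y_def using yS g0 g aS
              by (auto simp: y_def)
            then have yM: "y \<in> M" using am[OF less.prems] ym by auto
            have "y - a = x - a - g" "a \<le> y" using \<open>y = a + (x - a - g)\<close> by auto
            then have "a \<in> D S y" unfolding D_def using aS(1) g(3) by simp
            moreover have "y < x" using g0 g aS unfolding y_def by auto
            ultimately show ?thesis using less.IH[OF _ yM] by blast
          qed
        qed
      qed
    qed
  qed
  have eq: "D_set S M = (M - L) \<union> D_set S L"
  proof
    show "D_set S M \<subseteq> (M - L) \<union> D_set S L" using key unfolding D_set_def by blast
    show "(M - L) \<union> D_set S L \<subseteq> D_set S M"
      using self MS unfolding D_set_def L_def by blast
  qed
  have disj: "(M - L) \<inter> D_set S L = {}"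
  proof -
    { fix a assume a1: "a \<in> M - L" and a2: "a \<in> D_set S L"
      have "a \<ge> m + ne" using a1 Mge unfolding L_def by force
      moreover obtain y where "y \<in> L" "a \<in> D S y" using a2 unfolding D_set_def by auto
      then have "a < m + ne" unfolding L_def D_def by auto
      ultimately have False by simp }
    then show ?thesis by blast
  qed
  have finL: "finite (D_set S L)"
  proof -
    have "D_set S L \<subseteq> {..Max M}"
      unfolding D_set_def D_def L_def using finM by (auto intro: order_trans[OF _ Max_ge])
    then show ?thesis using finite_subset by blast
  qed
  have "card (D_set S M) = card (M - L) + card (D_set S L)"
    using eq disj finL finM card_Un_disjoint by (metis finite_Diff)
  then show ?thesis using eq unfolding L_def ne_def by simp
qed

end
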